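(* For every $D \in \Omega_n$, $n - 1 \le r_{\mathcal{S}_2}(D)^2 \le 2n$.
   Context: $\Omega_n$ denotes the set of $n\times n$ doubly stochastic matrices (nonnegative real entries, all row and column sums equal to $1$). $\|\cdot\|_{\mathcal{S}_2}$ is the Frobenius norm. For $A\in M_n(\mathbb{R})$, $r_{\mathcal{S}_2}(A) := \max_{B\in\Omega_n}\|A-B\|_{\mathcal{S}_2}$. *)

theory Defs
  imports "HOL-Analysis.Analysis"
begin

definition doubly_stochastic :: "(real^'n^'n) set" where
  "doubly_stochastic = {B. (\<forall>i j. 0 \<le> B $ i $ j) \<and>
      (\<forall>i. (\<Sum>j\<in>UNIV. B $ i $ j) = 1) \<and>
      (\<forall>j. (\<Sum>i\<in>UNIV. B $ i $ j) = 1)}"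

definition frob_norm :: "real^'n^'m \<Rightarrow> real" where
  "frob_norm A = sqrt (\<Sum>i\<in>UNIV. \<Sum>j\<in>UNIV. (A $ i $ j)^2)"

text \<open>r_{S_2}(A) = max over B in Omega_n of ||A - B||_{S_2} (the max exists by compactness).\<close>
definition r_S2 :: "real^'n^'n \<Rightarrow> real" where
  "r_S2 A = (SUP B\<in>doubly_stochastic. frob_norm (A - B))"

end

theory Submission
  imports Defs
begin

lemma bij_shift: "(n::nat) > 0 \<Longrightarrow> bij_betw (\<lambda>k. (a + k) mod n) {..<n} {..<n}"
proof -
  assume n: "n > 0"
  have "inj_on (\<lambda>k. (a + k) mod n) {..<n}"
  proof (rule inj_onI)
    fix x y assume xy: "x \<in> {..<n}" "y \<in> {..<n}" "(a + x) mod n = (a + y) mod n"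
    show "x = y"
    proof (cases "x \<le> y")
      case True
      then have "n dvd (a + y) - (a + x)" using xy(3) by (subst mod_eq_dvd_iff_nat[symmetric]) auto
      then have "n dvd y - x" by simp
      moreover have "y - x < n" using xy by auto
      ultimately have "y - x = 0"
      proof -
        assume d: "n dvd y - x" and l: "y - x < n"
        show "y - x = 0"
        proof (rule ccontr)
          assume "y - x \<noteq> 0"
          then have "n \<le> y - x" using d dvd_imp_le by blast
          then show False using l by simp
        qed
      qed
      then show ?thesis using True by simp
    next
      case False
      then have "n dvd (a + x) - (a + y)" using xy(3) by (subst mod_eq_dvd_iff_nat[symmetric]) auto
      then have "n dvd x - y" by simp
      moreover have "x - y < n" using xy by auto
      ultimately have "x - y = 0"
      proof -
        assume d: "n dvd x - y" and l: "x - y < n"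
        show "x - y = 0"
        proof (rule ccontr)
          assume "x - y \<noteq> 0"
          then have "n \<le> x - y" using d dvd_imp_le by blast
          then show False using l by simp
        qed
      qed
      then show ?thesis using False by simp
    qed
  qed
  moreover have "(\<lambda>k. (a + k) mod n) ` {..<n} \<subseteq> {..<n}" using n by auto
  ultimately show ?thesis
    by (simp add: bij_betw_def endo_inj_surj)
qed

lemma entry_le1:
  assumes "B \<in> doubly_stochastic" shows "B $ i $ j \<le> 1"
proof -
  have "B $ i $ j \<le> (\<Sum>j\<in>UNIV. B $ i $ j)"
    using assms by (intro member_le_sum) (auto simp: doubly_stochastic_def)
  then show ?thesis using assms by (simp add: doubly_stochastic_def)
qed

lemma frob_sq: "(frob_norm A)^2 = (\<Sum>i\<in>UNIV. \<Sum>j\<in>UNIV. (A $ i $ j)^2)"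
  unfolding frob_norm_def by (simp add: sum_nonneg)

lemma frob_nonneg: "0 \<le> frob_norm A"
  unfolding frob_norm_def by (simp add: sum_nonneg)

lemma total_sum:
  fixes D :: "real^'n^'n"
  assumes "D \<in> doubly_stochastic"
  shows "(\<Sum>i\<in>UNIV. \<Sum>j\<in>UNIV. D $ i $ j) = real CARD('n)"
  using assms by (simp add: doubly_stochastic_def)

lemma upper_one:
  fixes D B :: "real^'n^'n"
  assumes "D \<in> doubly_stochastic" "B \<in> doubly_stochastic"
  shows "frob_norm (D - B) \<le> sqrt (2 * real CARD('n))"
proof -
  have "\<And>i j. ((D - B) $ i $ j)^2 \<le> D $ i $ j + B $ i $ j"
  proof -
    fix i j
    have a: "0 \<le> D $ i $ j" "0 \<le> B $ i $ j" using assms by (auto simp: doubly_stochastic_def)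
    have b: "D $ i $ j \<le> 1" "B $ i $ j \<le> 1" using assms entry_le1 by auto
    have "(D $ i $ j - B $ i $ j)^2 \<le> D $ i $ j + B $ i $ j"
    proof -
      have c1: "D $ i $ j * D $ i $ j \<le> D $ i $ j" using a b by (simp add: mult_right_le_one_le)
      have c2: "B $ i $ j * B $ i $ j \<le> B $ i $ j" using a b by (simp add: mult_right_le_one_le)
      have c3: "0 \<le> D $ i $ j * B $ i $ j" using a by simp
      have "(D $ i $ j - B $ i $ j)^2 = D $ i $ j * D $ i $ j - 2 * (D $ i $ j * B $ i $ j) + B $ i $ j * B $ i $ j"
        by (simp add: power2_eq_square algebra_simps)
      then show ?thesis using c1 c2 c3 by linarith
    qed
    then show "((D - B) $ i $ j)^2 \<le> D $ i $ j + B $ i $ j" by simp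
  qed
  then have "(\<Sum>i\<in>UNIV. \<Sum>j\<in>UNIV. ((D - B) $ i $ j)^2) \<le> (\<Sum>i\<in>UNIV. \<Sum>j\<in>UNIV. D $ i $ j + B $ i $ j)"
    by (intro sum_mono) auto
  also have "\<dots> = 2 * real CARD('n)"
    using total_sum[OF assms(1)] total_sum[OF assms(2)] by (simp add: sum.distrib)
  finally show ?thesis unfolding frob_norm_def by (simp add: real_sqrt_le_mono)
qed


theorem mainTheorem5:
  fixes D :: "real^'n^'n"
  assumes "D \<in> doubly_stochastic"
  shows "real CARD('n) - 1 \<le> (r_S2 D)^2 \<and> (r_S2 D)^2 \<le> 2 * real CARD('n)"
proof -
  define n where "n = CARD('n)"
  have n0: "n > 0" unfolding n_def by simp
  have bdd: "bdd_above ((\<lambda>B. frob_norm (D - B)) ` doubly_stochastic)"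
    using upper_one[OF assms] by (intro bdd_aboveI2) auto
  have r0: "0 \<le> r_S2 D"
  proof -
    have "frob_norm (D - D) \<le> r_S2 D" unfolding r_S2_def using assms bdd by (rule cSUP_upper)
    moreover have "frob_norm (D - D) = 0" unfolding frob_norm_def by simp
    ultimately show ?thesis by simp
  qed
  have up: "r_S2 D \<le> sqrt (2 * real n)"
    unfolding r_S2_def n_def using assms upper_one[OF assms] by (intro cSUP_least) auto
  have upper: "(r_S2 D)^2 \<le> 2 * real n"
  proof -
    have "(r_S2 D)^2 \<le> (sqrt (2 * real n))^2" using up r0 by (rule power_mono)
    then show ?thesis by simp
  qed
  obtain g :: "'n \<Rightarrow> nat" where g: "bij_betw g UNIV {..<n}"
    using ex_bij_betw_finite_nat[of "UNIV :: 'n set"] unfolding n_def by (auto simp: atLeast0LessThan)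
  define P :: "nat \<Rightarrow> real^'n^'n" where
    "P k = (\<chi> i j. if g j = (g i + k) mod n then 1 else 0)" for k
  have Pe: "P k $ i $ j = (if g j = (g i + k) mod n then 1 else 0)" for k i j
    unfolding P_def by simp
  have gi: "g i < n" for i using g by (auto simp: bij_betw_def)
  have sumg: "(\<Sum>j\<in>UNIV. F (g j)) = (\<Sum>m<n. F m)" for F :: "nat \<Rightarrow> real"
    using sum.reindex_bij_betw[OF g, of F] .
  have sumsh: "(\<Sum>m<n. F ((a + m) mod n)) = (\<Sum>m<n. F m)" for F :: "nat \<Rightarrow> real" and a
    using sum.reindex_bij_betw[OF bij_shift[OF n0, of a], of F] .
  have row: "(\<Sum>j\<in>UNIV. P k $ i $ j) = 1" for k i
  proof -
    have "(\<Sum>j\<in>UNIV. P k $ i $ j) = (\<Sum>m<n. if m = (g i + k) mod n then 1 else 0)"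
      unfolding Pe using sumg[of "\<lambda>m. if m = (g i + k) mod n then 1 else 0"] by simp
    also have "\<dots> = 1" using n0 by simp
    finally show ?thesis .
  qed
  have col: "(\<Sum>i\<in>UNIV. P k $ i $ j) = 1" for k j
  proof -
    have "(\<Sum>i\<in>UNIV. P k $ i $ j) = (\<Sum>m<n. if g j = (k + m) mod n then 1 else 0)"
      unfolding Pe using sumg[of "\<lambda>m. if g j = (k + m) mod n then 1 else 0"] by (simp add: add.commute)
    also have "\<dots> = (\<Sum>m<n. if g j = m then 1 else 0)"
      using sumsh[of "\<lambda>m. if g j = m then 1 else 0" k] by simp
    also have "\<dots> = 1" using gi[of j] by simp
    finally show ?thesis .
  qed
  have sumk: "(\<Sum>k<n. P k $ i $ j) = 1" for i j
  proof -
    have "(\<Sum>k<n. P k $ i $ j) = (\<Sum>m<n. if g j = (g i + m) mod n then 1 else 0)"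
      unfolding Pe by simp
    also have "\<dots> = (\<Sum>m<n. if g j = m then 1 else 0)"
      using sumsh[of "\<lambda>m. if g j = m then 1 else 0" "g i"] by simp
    also have "\<dots> = 1" using gi[of j] by simp
    finally show ?thesis .
  qed
  have Pds: "P k \<in> doubly_stochastic" for k
    unfolding doubly_stochastic_def using row col by (auto simp: Pe)
  define S where "S k = (\<Sum>i\<in>UNIV. \<Sum>j\<in>UNIV. ((D - P k) $ i $ j)^2)" for k
  have entry: "(\<Sum>k<n. ((D - P k) $ i $ j)^2) = real n * (D $ i $ j)^2 - 2 * D $ i $ j + 1" for i j
  proof -
    have "\<And>k. ((D - P k) $ i $ j)^2 = (D $ i $ j)^2 - 2 * D $ i $ j * P k $ i $ j + P k $ i $ j"
      by (simp add: Pe power2_eq_square algebra_simps)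
    then have "(\<Sum>k<n. ((D - P k) $ i $ j)^2) = (\<Sum>k<n. (D $ i $ j)^2 - 2 * D $ i $ j * P k $ i $ j + P k $ i $ j)"
      by simp
    also have "\<dots> = real n * (D $ i $ j)^2 - 2 * D $ i $ j * (\<Sum>k<n. P k $ i $ j) + (\<Sum>k<n. P k $ i $ j)"
      by (simp add: sum.distrib sum_subtractf sum_distrib_left)
    finally show ?thesis using sumk by simp
  qed
  have tot: "(\<Sum>i\<in>UNIV. \<Sum>j\<in>UNIV. D $ i $ j) = real n"
    using total_sum[OF assms] n_def by simp
  have sumS: "(\<Sum>k<n. S k) = real n * (\<Sum>i\<in>UNIV. \<Sum>j\<in>UNIV. (D $ i $ j)^2) - 2 * real n + real n * real n"
  proof -
    have "(\<Sum>k<n. S k) = (\<Sum>i\<in>UNIV. \<Sum>k<n. \<Sum>j\<in>UNIV. ((D - P k) $ i $ j)^2)"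
      unfolding S_def by (rule sum.swap)
    also have "\<dots> = (\<Sum>i\<in>UNIV. \<Sum>j\<in>UNIV. \<Sum>k<n. ((D - P k) $ i $ j)^2)"
      by (intro sum.cong refl sum.swap)
    also have "\<dots> = (\<Sum>i\<in>UNIV. \<Sum>j\<in>UNIV. real n * (D $ i $ j)^2 - 2 * D $ i $ j + 1)"
      by (intro sum.cong refl entry)
    also have "\<dots> = real n * (\<Sum>i\<in>UNIV. \<Sum>j\<in>UNIV. (D $ i $ j)^2) - 2 * (\<Sum>i\<in>UNIV. \<Sum>j\<in>UNIV. D $ i $ j) + real n * real n"
      by (simp add: sum.distrib sum_subtractf sum_distrib_left n_def)
    finally show ?thesis using tot by simp
  qed
  have sq1: "(\<Sum>i\<in>UNIV. \<Sum>j\<in>UNIV. (D $ i $ j)^2) \<ge> 1"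
  proof -
    have "0 \<le> (\<Sum>i\<in>UNIV. \<Sum>j\<in>UNIV. (D $ i $ j - 1 / real n)^2)"
      by (intro sum_nonneg) auto
    also have "\<dots> = (\<Sum>i\<in>UNIV. \<Sum>j\<in>UNIV. (D $ i $ j)^2 - 2 / real n * D $ i $ j + 1 / (real n * real n))"
      by (simp add: power2_eq_square algebra_simps)
    also have "\<dots> = (\<Sum>i\<in>UNIV. \<Sum>j\<in>UNIV. (D $ i $ j)^2) - 2 / real n * (\<Sum>i\<in>UNIV. \<Sum>j\<in>UNIV. D $ i $ j) + real n * real n / (real n * real n)"
      by (simp add: sum.distrib sum_subtractf sum_distrib_left n_def)
    also have "\<dots> = (\<Sum>i\<in>UNIV. \<Sum>j\<in>UNIV. (D $ i $ j)^2) - 1"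
      using tot n0 by simp
    finally show ?thesis by simp
  qed
  obtain k where k: "S k \<ge> real n - 1"
  proof (rule ccontr)
    assume "\<not> thesis"
    then have "\<And>k. S k < real n - 1" using that not_le by blast
    then have "(\<Sum>k<n. S k) < (\<Sum>k<(n::nat). real n - 1)"
      using n0 by (intro sum_strict_mono) auto
    moreover have "(\<Sum>k<n. S k) \<ge> real n * 1 - 2 * real n + real n * real n"
      unfolding sumS using sq1 n0 by simp
    ultimately show False by (simp add: algebra_simps)
  qed
  have "frob_norm (D - P k) \<le> r_S2 D"
    unfolding r_S2_def using Pds bdd by (rule cSUP_upper)
  then have "(frob_norm (D - P k))^2 \<le> (r_S2 D)^2"
    by (rule power_mono) (rule frob_nonneg)
  then have "real n - 1 \<le> (r_S2 D)^2" using k unfolding S_def frob_sq by simp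
  then show ?thesis using upper n_def by simp
qed

end
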